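(* For every point of $\mathbb{R}^8$ and every $\mathfrak{g}$-valued $2$-form $\varphi \in \Lambda^2_+\mathbb{R}^8\otimes\mathfrak{g}$ at that point, \[\sum_{k,l=1}^8 e_k \wedge [F_B(e_k,e_l), i_{e_l}\varphi] \in \Lambda^2_+\mathbb{R}^8 \otimes \mathfrak{g},\] where $F_B$ is the curvature of the connection $B$ described in the context and the bracket is the Lie bracket of $\mathfrak{g}$.
   Context: Write $\mathbb{R}^8 = E \oplus E^\perp$ with orthonormal basis $e_1,\dots,e_4$ of $E$ and $e_1^\perp,\dots,e_4^\perp$ of $E^\perp$; set $e_5=e_1^\perp,\dots,e_8=e_4^\perp$; vectors are identified with covectors via the Euclidean metric; coordinates are $(x,y)$ with $x\in E$ and $y=\sum_k y_k e_k^\perp \in E^\perp$. The $4$-form $\Omega$ is $\Omega = -e_1 e_2 e_1^\perp e_2^\perp - e_1 e_2 e_3^\perp e_4^\perp - e_3 e_4 e_1^\perp e_2^\perp - e_3 e_4 e_3^\perp e_4^\perp + e_1 e_3 e_2^\perp e_4^\perp - e_1 e_3 e_1^\perp e_3^\perp - e_2 e_4 e_2^\perp e_4^\perp + e_2 e_4 e_1^\perp e_3^\perp - e_1 e_4 e_2^\perp e_3^\perp - e_1 e_4 e_1^\perp e_4^\perp - e_2 e_3 e_2^\perp e_3^\perp - e_2 e_3 e_1^\perp e_4^\perp + e_1 e_2 e_3 e_4 + e_1^\perp e_2^\perp e_3^\perp e_4^\perp$ (juxtaposition = wedge). With $*$ the Euclidean Hodge star (orientation $e_1\wedge\dots\wedge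 e_4\wedge e_1^\perp\wedge\dots\wedge e_4^\perp$), $\Lambda^2_+\mathbb{R}^8 = \{\varphi: 3\varphi - *(\Omega\wedge\varphi)=0\}$. Let $\mathfrak{g}\subset \mathfrak{so}(E^\perp)$ be the Lie algebra spanned by $\mathfrak{i},\mathfrak{j},\mathfrak{k}$, where $\mathfrak{i}(e_1^\perp)=-e_2^\perp, \mathfrak{i}(e_2^\perp)=e_1^\perp, \mathfrak{i}(e_3^\perp)=e_4^\perp, \mathfrak{i}(e_4^\perp)=-e_3^\perp$; $\mathfrak{j}(e_1^\perp)=-e_3^\perp, \mathfrak{j}(e_2^\perp)=-e_4^\perp, \mathfrak{j}(e_3^\perp)=e_1^\perp, \mathfrak{j}(e_4^\perp)=e_2^\perp$; $\mathfrak{k}(e_1^\perp)=-e_4^\perp, \mathfrak{k}(e_2^\perp)=e_3^\perp, \mathfrak{k}(e_3^\perp)=-e_2^\perp, \mathfrak{k}(e_4^\perp)=e_1^\perp$. Fix $\varepsilon>0$. $B$ is the $\mathfrak{g}$-valued $1$-form (connection $d+B$) on $\mathbb{R}^8$ with $B(e_i)=0$ for $1\le i\le 4$ and $B(e_1^\perp)=\frac{-y_2\mathfrak{i}-y_3\mathfrak{j}-y_4\mathfrak{k}}{\varepsilon^2+|y|^2}$, $B(e_2^\perp)=\frac{y_1\mathfrak{i}-y_4\mathfrak{j}+y_3\mathfrak{k}}{\varepsilon^2+|y|^2}$, $B(e_3^\perp)=\frac{y_4\mathfrak{i}+y_1\mathfrak{j}-y_2\mathfrak{k}}{\varepsilon^2+|y|^2}$,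 $B(e_4^\perp)=\frac{-y_3\mathfrak{i}+y_2\mathfrak{j}+y_1\mathfrak{k}}{\varepsilon^2+|y|^2}$. Its curvature is $F_B = dB + \frac12[B\wedge B]$, a $\mathfrak{g}$-valued $2$-form. *)

theory Defs
  imports "HOL-Analysis.Analysis"
begin

text \<open>Exterior algebra of R^8 with orthonormal basis e_1..e_8 (e_5..e_8 = e_1^perp..e_4^perp).
 A (possibly vector-valued) form is given by its coefficient function on index sets:
 alpha = sum over S subset of {1..8} of (alpha S) e_S, with e_S the wedge of the e_i, i in S, in
 increasing order.\<close>

definition idx :: "nat set" where "idx = {1..8}"

text \<open>Sign of e_S wedge e_T relative to e_(S union T), for disjoint S, T.\<close>
definition sgn2 :: "nat set \<Rightarrow> nat set \<Rightarrow> real" where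
  "sgn2 S T = (-1) ^ card {(s, t). s \<in> S \<and> t \<in> T \<and> t < s}"

definition wedge :: "(nat set \<Rightarrow> real) \<Rightarrow> (nat set \<Rightarrow> 'v::real_vector) \<Rightarrow> nat set \<Rightarrow> 'v" where
  "wedge \<alpha> \<beta> U = (if U \<subseteq> idx then (\<Sum>S\<in>Pow U. (sgn2 S (U - S) * \<alpha> S) *\<^sub>R \<beta> (U - S)) else 0)"

text \<open>Euclidean Hodge star, orientation e_1 wedge ... wedge e_8: *e_S = sgn2 S S^c e_(S^c).\<close>
definition hodge :: "(nat set \<Rightarrow> 'v::real_vector) \<Rightarrow> nat set \<Rightarrow> 'v" where
  "hodge \<alpha> U = (if U \<subseteq> idx then sgn2 (idx - U) U *\<^sub>R \<alpha> (idx - U) else 0)"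

definition intprod :: "nat \<Rightarrow> (nat set \<Rightarrow> 'v::real_vector) \<Rightarrow> nat set \<Rightarrow> 'v" where
  "intprod l \<alpha> U = (if l \<in> idx \<and> U \<subseteq> idx \<and> l \<notin> U then sgn2 {l} U *\<^sub>R \<alpha> (insert l U) else 0)"

definition e1f :: "nat \<Rightarrow> nat set \<Rightarrow> real" where
  "e1f i = (\<lambda>U. if U = {i} then 1 else 0)"

definition w4 :: "nat \<Rightarrow> nat \<Rightarrow> nat \<Rightarrow> nat \<Rightarrow> nat set \<Rightarrow> real" where
  "w4 a b c d = wedge (e1f a) (wedge (e1f b) (wedge (e1f c) (e1f d)))"

definition Omega :: "nat set \<Rightarrow> real" where
  "Omega U =
     - w4 1 2 5 6 U - w4 1 2 7 8 U - w4 3 4 5 6 U - w4 3 4 7 8 U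
     + w4 1 3 6 8 U - w4 1 3 5 7 U - w4 2 4 6 8 U + w4 2 4 5 7 U
     - w4 1 4 6 7 U - w4 1 4 5 8 U - w4 2 3 6 7 U - w4 2 3 5 8 U
     + w4 1 2 3 4 U + w4 5 6 7 8 U"

definition is_form :: "nat \<Rightarrow> (nat set \<Rightarrow> 'v::real_vector) \<Rightarrow> bool" where
  "is_form k \<alpha> \<longleftrightarrow> (\<forall>U. \<not> (U \<subseteq> idx \<and> card U = k) \<longrightarrow> \<alpha> U = 0)"

text \<open>Endomorphisms of E^perp as 4x4 matrices w.r.t. e_1^perp..e_4^perp; M $ r $ c is the
 e_r^perp-coefficient of M(e_c^perp). Lie bracket = commutator.\<close>
type_synonym mat4 = "real^4^4"

definition lie :: "mat4 \<Rightarrow> mat4 \<Rightarrow> mat4" where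
  "lie A B = A ** B - B ** A"

definition mi :: mat4 where
  "mi = (\<chi> r c. if c = 1 \<and> r = 2 then -1 else if c = 2 \<and> r = 1 then 1
               else if c = 3 \<and> r = 4 then 1 else if c = 4 \<and> r = 3 then -1 else 0)"

definition mj :: mat4 where
  "mj = (\<chi> r c. if c = 1 \<and> r = 3 then -1 else if c = 2 \<and> r = 4 then -1
               else if c = 3 \<and> r = 1 then 1 else if c = 4 \<and> r = 2 then 1 else 0)"

definition mk :: mat4 where
  "mk = (\<chi> r c. if c = 1 \<and> r = 4 then -1 else if c = 2 \<and> r = 3 then 1
               else if c = 3 \<and> r = 2 then -1 else if c = 4 \<and> r = 1 then 1 else 0)"

definition gLie :: "mat4 set" where
  "gLie = span {mi, mj, mk}"

definition Lambda2plus_g :: "(nat set \<Rightarrow> mat4) set" where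
  "Lambda2plus_g = {\<phi>. is_form 2 \<phi> \<and> (\<forall>U. \<phi> U \<in> gLie) \<and>
                        (\<forall>U. 3 *\<^sub>R \<phi> U - hodge (wedge Omega \<phi>) U = 0)}"

text \<open>Points of R^8 are p :: nat => real with coordinates p 1 .. p 8; x = (p 1..p 4),
 y_m = p (4+m). B eps p k is B(e_k) at the point p.\<close>
definition Bconn :: "real \<Rightarrow> (nat \<Rightarrow> real) \<Rightarrow> nat \<Rightarrow> mat4" where
  "Bconn \<epsilon> p k =
    (let y = (\<lambda>m. p (4 + m)); D = \<epsilon>\<^sup>2 + (\<Sum>m\<in>{1..4}. (y m)\<^sup>2) in
     if k = 5 then (1 / D) *\<^sub>R ((- y 2) *\<^sub>R mi + (- y 3) *\<^sub>R mj + (- y 4) *\<^sub>R mk)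
     else if k = 6 then (1 / D) *\<^sub>R (y 1 *\<^sub>R mi + (- y 4) *\<^sub>R mj + y 3 *\<^sub>R mk)
     else if k = 7 then (1 / D) *\<^sub>R (y 4 *\<^sub>R mi + y 1 *\<^sub>R mj + (- y 2) *\<^sub>R mk)
     else if k = 8 then (1 / D) *\<^sub>R ((- y 3) *\<^sub>R mi + y 2 *\<^sub>R mj + y 1 *\<^sub>R mk)
     else 0)"

definition dB :: "real \<Rightarrow> (nat \<Rightarrow> real) \<Rightarrow> nat \<Rightarrow> nat \<Rightarrow> mat4" where
  "dB \<epsilon> p k l = (\<chi> r c. deriv (\<lambda>t. Bconn \<epsilon> (p(k := p k + t)) l $ r $ c) 0)"

text \<open>Curvature F_B = dB + 1/2 [B wedge B], evaluated on (e_k, e_l):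
 F_B(e_k,e_l) = d_k B(e_l) - d_l B(e_k) + [B(e_k), B(e_l)].\<close>
definition FB :: "real \<Rightarrow> (nat \<Rightarrow> real) \<Rightarrow> nat \<Rightarrow> nat \<Rightarrow> mat4" where
  "FB \<epsilon> p k l = dB \<epsilon> p k l - dB \<epsilon> p l k + lie (Bconn \<epsilon> p k) (Bconn \<epsilon> p l)"

end

theory Submission
  imports Defs
begin

definition emb :: "real \<Rightarrow> real \<Rightarrow> real \<Rightarrow> mat4" where
  "emb a b c = a *\<^sub>R mi + b *\<^sub>R mj + c *\<^sub>R mk"

lemma lie_add_left: "lie (A + B) C = lie A C + lie B C"
  by (simp add: lie_def vec_eq_iff matrix_matrix_mult_def sum.distrib algebra_simps)
lemma lie_add_right: "lie C (A + B) = lie C A + lie C B"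
  by (simp add: lie_def vec_eq_iff matrix_matrix_mult_def sum.distrib algebra_simps)
lemma lie_scale_left: "lie (x *\<^sub>R A) C = x *\<^sub>R lie A C"
  by (simp add: lie_def vec_eq_iff matrix_matrix_mult_def sum_distrib_left algebra_simps)
lemma lie_scale_right: "lie C (x *\<^sub>R A) = x *\<^sub>R lie C A"
  by (simp add: lie_def vec_eq_iff matrix_matrix_mult_def sum_distrib_left algebra_simps)
lemma lie_anti: "lie A B = - lie B A"
  by (simp add: lie_def)
lemma lie_self: "lie A A = 0"
  by (simp add: lie_def)

lemma lie_ij: "lie mi mj = 2 *\<^sub>R mk"
  by (simp add: lie_def vec_eq_iff matrix_matrix_mult_def mi_def mj_def mk_def sum_4 forall_4)
lemma lie_jk: "lie mj mk = 2 *\<^sub>R mi"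
  by (simp add: lie_def vec_eq_iff matrix_matrix_mult_def mi_def mj_def mk_def sum_4 forall_4)
lemma lie_ki: "lie mk mi = 2 *\<^sub>R mj"
  by (simp add: lie_def vec_eq_iff matrix_matrix_mult_def mi_def mj_def mk_def sum_4 forall_4)

lemma emb_entries: "emb a b c $ 1 $ 2 = a" "emb a b c $ 1 $ 3 = b" "emb a b c $ 1 $ 4 = c"
  by (simp_all add: emb_def mi_def mj_def mk_def)

lemma emb_eq_iff: "emb a b c = emb a' b' c' \<longleftrightarrow> a = a' \<and> b = b' \<and> c = c'"
  by (metis emb_entries)

lemma emb_add: "emb a b c + emb a' b' c' = emb (a+a') (b+b') (c+c')"
  by (simp add: emb_def algebra_simps)
lemma emb_diff: "emb a b c - emb a' b' c' = emb (a-a') (b-b') (c-c')"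
  by (simp add: emb_def algebra_simps)
lemma emb_scale: "x *\<^sub>R emb a b c = emb (x*a) (x*b) (x*c)"
  by (simp add: emb_def algebra_simps)
lemma emb_zero: "0 = emb 0 0 0"
  by (simp add: emb_def)
lemma emb_uminus: "- emb a b c = emb (-a) (-b) (-c)"
  by (simp add: emb_def algebra_simps)
lemma mi_emb: "mi = emb 1 0 0" and mj_emb: "mj = emb 0 1 0" and mk_emb: "mk = emb 0 0 1"
  by (simp_all add: emb_def)

lemma lie_emb: "lie (emb a b c) (emb a' b' c') = emb (2*(b*c' - c*b')) (2*(c*a' - a*c')) (2*(a*b' - b*a'))"
proof -
  have ji: "lie mj mi = -(2 *\<^sub>R mk)" using lie_ij lie_anti by metis
  have kj: "lie mk mj = -(2 *\<^sub>R mi)" using lie_jk lie_anti by metis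
  have ik: "lie mi mk = -(2 *\<^sub>R mj)" using lie_ki lie_anti by metis
  show ?thesis
    unfolding emb_def
    by (simp add: lie_add_left lie_add_right lie_scale_left lie_scale_right lie_self
        lie_ij lie_jk lie_ki ji kj ik algebra_simps)
qed

definition Dp :: "real \<Rightarrow> (nat \<Rightarrow> real) \<Rightarrow> real" where
  "Dp \<epsilon> p = \<epsilon>\<^sup>2 + (\<Sum>m\<in>{1..4}. (p (4+m))\<^sup>2)"

definition NL :: "(nat \<Rightarrow> real) \<Rightarrow> nat \<Rightarrow> mat4" where
  "NL p l = (if l = 5 then emb (- p 6) (- p 7) (- p 8)
     else if l = 6 then emb (p 5) (- p 8) (p 7)
     else if l = 7 then emb (p 8) (p 5) (- p 6)
     else if l = 8 then emb (- p 7) (p 6) (p 5) else 0)"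

definition ek :: "nat \<Rightarrow> nat \<Rightarrow> real" where "ek k = (\<lambda>i. if i = k then 1 else 0)"

definition wc :: "nat \<Rightarrow> nat \<Rightarrow> nat \<Rightarrow> real" where
  "wc b k l = (if b = 1 then (if (k,l) = (5,6) then 1 else if (k,l) = (6,5) then -1
                 else if (k,l) = (7,8) then -1 else if (k,l) = (8,7) then 1 else 0)
    else if b = 2 then (if (k,l) = (5,7) then 1 else if (k,l) = (7,5) then -1
                 else if (k,l) = (6,8) then 1 else if (k,l) = (8,6) then -1 else 0)
    else if b = 3 then (if (k,l) = (5,8) then 1 else if (k,l) = (8,5) then -1
                 else if (k,l) = (6,7) then -1 else if (k,l) = (7,6) then 1 else 0)
    else 0)"

definition Wm :: "nat \<Rightarrow> nat \<Rightarrow> mat4" where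
  "Wm k l = emb (wc 1 k l) (wc 2 k l) (wc 3 k l)"

lemma sum14: "(\<Sum>m\<in>{1..4::nat}. f m) = f 1 + f 2 + f 3 + f 4"
  by (simp add: numeral_eq_Suc atLeastAtMostSuc_conv add.commute add.left_commute)

lemma Dp_pos: "\<epsilon> > 0 \<Longrightarrow> Dp \<epsilon> p > 0"
  unfolding Dp_def by (intro add_pos_nonneg) (auto intro: sum_nonneg)

lemma Bconn_eq: "Bconn \<epsilon> p l = (1 / Dp \<epsilon> p) *\<^sub>R NL p l"
  unfolding Bconn_def Dp_def NL_def Let_def
  by (simp add: sum14 emb_def algebra_simps)

lemma deriv_ratio:
  fixes M G :: mat4
  assumes "D > 0"
  shows "deriv (\<lambda>t. ((1 / (D + b*t + c*t\<^sup>2)) *\<^sub>R (M + t *\<^sub>R G)) $ r $ s) 0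
       = ((1/D) *\<^sub>R G - (b / D\<^sup>2) *\<^sub>R M) $ r $ s"
proof -
  have eq: "(\<lambda>t. ((1 / (D + b*t + c*t\<^sup>2)) *\<^sub>R (M + t *\<^sub>R G)) $ r $ s)
      = (\<lambda>t. (M $ r $ s + t * G $ r $ s) / (D + b*t + c*t\<^sup>2))"
    by (simp add: divide_simps)
  have "((\<lambda>t. (M $ r $ s + t * G $ r $ s) / (D + b*t + c*t\<^sup>2)) has_real_derivative
        ((G $ r $ s) * D - (M $ r $ s) * b) / D\<^sup>2) (at 0)"
    using assms
    by (auto intro!: derivative_eq_intros simp: power2_eq_square)
  hence "deriv (\<lambda>t. (M $ r $ s + t * G $ r $ s) / (D + b*t + c*t\<^sup>2)) 0
        = ((G $ r $ s) * D - (M $ r $ s) * b) / D\<^sup>2"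
    by (rule DERIV_imp_deriv)
  thus ?thesis using assms unfolding eq by (simp add: field_simps power2_eq_square)
qed

lemma NL_upd: "k \<in> {5,6,7,8} \<Longrightarrow> NL (p(k := p k + t)) l = NL p l + t *\<^sub>R NL (ek k) l"
  unfolding NL_def ek_def
  by (auto simp: emb_add emb_scale emb_zero[symmetric])

lemma Dp_upd: "k \<in> {5,6,7,8} \<Longrightarrow> Dp \<epsilon> (p(k := p k + t)) = Dp \<epsilon> p + (2 * p k) * t + 1 * t\<^sup>2"
  unfolding Dp_def sum14 by (auto simp: power2_eq_square algebra_simps)

lemma NL_upd_other: "k \<notin> {5,6,7,8} \<Longrightarrow> NL (p(k := x)) l = NL p l"
  unfolding NL_def by auto

lemma Dp_upd_other: "k \<notin> {5,6,7,8} \<Longrightarrow> Dp \<epsilon> (p(k := x)) = Dp \<epsilon> p"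
  unfolding Dp_def sum14 by auto

lemma dB_eq:
  assumes "\<epsilon> > 0"
  shows "dB \<epsilon> p k l = (if k \<in> {5,6,7,8} then (1 / Dp \<epsilon> p) *\<^sub>R NL (ek k) l
                         - (2 * p k / (Dp \<epsilon> p)\<^sup>2) *\<^sub>R NL p l else 0)"
proof (cases "k \<in> {5,6,7,8}")
  case True
  have "\<And>r c. deriv (\<lambda>t. Bconn \<epsilon> (p(k := p k + t)) l $ r $ c) 0 =
     ((1 / Dp \<epsilon> p) *\<^sub>R NL (ek k) l - (2 * p k / (Dp \<epsilon> p)\<^sup>2) *\<^sub>R NL p l) $ r $ c"
  proof -
    fix r c
    have "(\<lambda>t. Bconn \<epsilon> (p(k := p k + t)) l $ r $ c) =
      (\<lambda>t. ((1 / (Dp \<epsilon> p + (2 * p k) * t + 1 * t\<^sup>2)) *\<^sub>R (NL p l + t *\<^sub>R NL (ek k) l)) $ r $ c)"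
      using True by (simp add: Bconn_eq NL_upd Dp_upd)
    thus "?thesis r c"
      by (simp only:) (rule deriv_ratio[OF Dp_pos[OF assms]])
  qed
  thus ?thesis using True by (simp add: dB_def vec_eq_iff)
next
  case False
  have "\<And>r c. deriv (\<lambda>t. Bconn \<epsilon> (p(k := p k + t)) l $ r $ c) 0 = 0"
    using False by (simp add: Bconn_eq NL_upd_other Dp_upd_other)
  thus ?thesis using False by (simp add: dB_def vec_eq_iff)
qed

lemma NL_zero: "l \<notin> {5,6,7,8} \<Longrightarrow> NL p l = 0"
  unfolding NL_def by auto

lemma key16:
  assumes "k \<in> {5,6,7,8}" "l \<in> {5,6,7,8}"
  shows "(\<epsilon>\<^sup>2 + ((p 5)\<^sup>2 + (p 6)\<^sup>2 + (p 7)\<^sup>2 + (p 8)\<^sup>2)) *\<^sub>R (NL (ek k) l - NL (ek l) k)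
     - 2 *\<^sub>R (p k *\<^sub>R NL p l - p l *\<^sub>R NL p k) + lie (NL p k) (NL p l) = (2*\<epsilon>\<^sup>2) *\<^sub>R Wm k l"
  using assms
  apply (simp only: insert_iff empty_iff)
  apply (elim disjE)
  apply (simp_all add: NL_def ek_def Wm_def wc_def lie_emb emb_scale emb_diff emb_add emb_uminus emb_eq_iff)
  apply (simp_all add: power2_eq_square algebra_simps)
  done

lemma FB_abstract:
  fixes A B Nk Nl :: mat4
  assumes "D \<noteq> 0"
  shows "((1/D) *\<^sub>R A - (2 * pk / D\<^sup>2) *\<^sub>R Nl) - ((1/D) *\<^sub>R B - (2 * pl / D\<^sup>2) *\<^sub>R Nk)
     + lie ((1/D) *\<^sub>R Nk) ((1/D) *\<^sub>R Nl)
     = (1 / D\<^sup>2) *\<^sub>R (D *\<^sub>R (A - B) - 2 *\<^sub>R (pk *\<^sub>R Nl - pl *\<^sub>R Nk) + lie Nk Nl)"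
  using assms
  by (simp add: lie_scale_left lie_scale_right scaleR_diff_right scaleR_add_right scaleR_scaleR
      power2_eq_square algebra_simps)


lemma Dp_expand: "Dp \<epsilon> p = \<epsilon>\<^sup>2 + ((p 5)\<^sup>2 + (p 6)\<^sup>2 + (p 7)\<^sup>2 + (p 8)\<^sup>2)"
  unfolding Dp_def sum14 by simp

lemma FB_eq:
  assumes "\<epsilon> > 0"
  shows "FB \<epsilon> p k l = (2 * \<epsilon>\<^sup>2 / (Dp \<epsilon> p)\<^sup>2) *\<^sub>R Wm k l"
proof (cases "k \<in> {5,6,7,8} \<and> l \<in> {5,6,7,8}")
  case True
  have Dne: "Dp \<epsilon> p \<noteq> 0" using Dp_pos[OF assms, of p] by linarith
  have "FB \<epsilon> p k l = (1 / (Dp \<epsilon> p)\<^sup>2) *\<^sub>R ((Dp \<epsilon> p) *\<^sub>R (NL (ek k) l - NL (ek l) k)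
     - 2 *\<^sub>R (p k *\<^sub>R NL p l - p l *\<^sub>R NL p k) + lie (NL p k) (NL p l))"
    using True unfolding FB_def dB_eq[OF assms] Bconn_eq
    by (simp add: FB_abstract[OF Dne])
  also have "\<dots> = (1 / (Dp \<epsilon> p)\<^sup>2) *\<^sub>R ((2*\<epsilon>\<^sup>2) *\<^sub>R Wm k l)"
    unfolding Dp_expand using key16 True by simp
  finally show ?thesis by simp
next
  case False
  then show ?thesis
    unfolding FB_def dB_eq[OF assms] Bconn_eq
    by (auto simp: NL_zero Wm_def wc_def emb_zero[symmetric] lie_def)
qed

lemma idx_eq: "idx = {1,2,3,4,5,6,7,8}"
  by (auto simp: idx_def)

lemma sgn2_sum: "finite S \<Longrightarrow> finite T \<Longrightarrow>
  sgn2 S T = (-1) ^ (\<Sum>s\<in>S. \<Sum>t\<in>T. if t < s then 1 else 0)"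
proof -
  assume fS: "finite S" and fT: "finite T"
  have "{(s, t). s \<in> S \<and> t \<in> T \<and> t < s} = Sigma S (\<lambda>s. {t\<in>T. t < s})" by auto
  hence "card {(s, t). s \<in> S \<and> t \<in> T \<and> t < s} = (\<Sum>s\<in>S. card {t\<in>T. t < s})"
    using fS fT by (simp add: card_SigmaI)
  also have "\<dots> = (\<Sum>s\<in>S. \<Sum>t\<in>T. if t < s then 1 else 0)"
    using fT by (simp add: sum.inter_filter[symmetric])
  finally show ?thesis by (simp add: sgn2_def)
qed

lemma wedge_e1f: "wedge (e1f a) \<beta> U = (if U \<subseteq> idx \<and> a \<in> U then sgn2 {a} (U - {a}) *\<^sub>R \<beta> (U - {a}) else 0)"
proof -
  have "wedge (e1f a) \<beta> U = (if U \<subseteq> idx then (\<Sum>S\<in>Pow U. if S = {a} then sgn2 S (U - S) *\<^sub>R \<beta> (U - S) else 0) else 0)"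
    unfolding wedge_def e1f_def by (auto intro!: sum.cong)
  also have "\<dots> = (if U \<subseteq> idx \<and> a \<in> U then sgn2 {a} (U - {a}) *\<^sub>R \<beta> (U - {a}) else 0)"
    by (simp add: sum.delta' finite_subset[OF _ finite_atLeastAtMost] idx_def)
  finally show ?thesis .
qed

lemma wedge_ind: "wedge (\<lambda>S. c * (if S = A then 1 else 0)) \<beta> W =
   (if W \<subseteq> idx \<and> A \<subseteq> W then (sgn2 A (W - A) * c) *\<^sub>R \<beta> (W - A) else 0)"
proof -
  have "wedge (\<lambda>S. c * (if S = A then 1 else 0)) \<beta> W = (if W \<subseteq> idx then (\<Sum>S\<in>Pow W. if S = A then (sgn2 S (W - S) * c) *\<^sub>R \<beta> (W - S) else 0) else 0)"
    unfolding wedge_def by (auto intro!: sum.cong)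
  also have "\<dots> = (if W \<subseteq> idx \<and> A \<subseteq> W then (sgn2 A (W - A) * c) *\<^sub>R \<beta> (W - A) else 0)"
    by (simp add: sum.delta' finite_subset[OF _ finite_atLeastAtMost] idx_def)
  finally show ?thesis .
qed

lemma wedge_add_left: "wedge (\<lambda>S. f S + g S) \<beta> W = wedge f \<beta> W + wedge g \<beta> W"
  unfolding wedge_def by (simp add: sum.distrib algebra_simps scaleR_add_left)

lemma wedge_zero_left: "wedge (\<lambda>S. 0) \<beta> W = 0"
  unfolding wedge_def by simp

lemma wedge_e1f_ind:
  assumes "a \<in> idx" "V \<subseteq> idx" "\<forall>x\<in>V. a < x"
  shows "wedge (e1f a) (\<lambda>U. if U = V then 1 else 0) = (\<lambda>U. if U = insert a V then 1 else 0)"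
proof
  fix U
  have aV: "a \<notin> V" using assms(3) by auto
  have s: "sgn2 {a} V = 1"
  proof -
    have e: "{(s, t). s \<in> {a} \<and> t \<in> V \<and> t < s} = {}" using assms(3) by auto
    show ?thesis by (simp only: sgn2_def e card.empty power_0)
  qed
  have "(U \<subseteq> idx \<and> a \<in> U \<and> U - {a} = V) \<longleftrightarrow> U = insert a V"
    using assms aV by auto
  thus "wedge (e1f a) (\<lambda>U. if U = V then 1 else 0) U = (if U = insert a V then 1 else 0)"
    unfolding wedge_e1f using s by auto
qed

lemma e1f_ind: "e1f d = (\<lambda>U. if U = {d} then 1 else 0)"
  by (simp add: e1f_def)

lemma w4_ind:
  assumes "a \<in> idx" "b \<in> idx" "c \<in> idx" "d \<in> idx" "a < b" "b < c" "c < d"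
  shows "w4 a b c d = (\<lambda>U. if U = {a,b,c,d} then 1 else 0)"
  unfolding w4_def e1f_ind[of d]
  using assms
  by (simp add: wedge_e1f_ind)

definition OmL :: "(real \<times> nat set) list" where
  "OmL = [(-1,{1,2,5,6}), (-1,{1,2,7,8}), (-1,{3,4,5,6}), (-1,{3,4,7,8}), (1,{1,3,6,8}),
          (-1,{1,3,5,7}), (-1,{2,4,6,8}), (1,{2,4,5,7}), (-1,{1,4,6,7}), (-1,{1,4,5,8}),
          (-1,{2,3,6,7}), (-1,{2,3,5,8}), (1,{1,2,3,4}), (1,{5,6,7,8})]"

lemma Omega_list: "Omega = (\<lambda>U. sum_list (map (\<lambda>(c,A). c * (if U = A then 1 else 0)) OmL))"
proof
  fix U
  show "Omega U = sum_list (map (\<lambda>(c,A). c * (if U = A then 1 else 0)) OmL)"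
    unfolding Omega_def OmL_def
    by (simp add: w4_ind idx_def split del: if_split)
qed

lemma wedge_list: "wedge (\<lambda>S. sum_list (map (\<lambda>(c,A). c * (if S = A then 1 else 0)) L)) \<beta> W =
   sum_list (map (\<lambda>(c,A). if W \<subseteq> idx \<and> A \<subseteq> W then (sgn2 A (W - A) * c) *\<^sub>R \<beta> (W - A) else 0) L)"
proof (induction L)
  case Nil
  then show ?case by (simp add: wedge_zero_left)
next
  case (Cons x L)
  obtain c A where x: "x = (c, A)" by fastforce
  show ?case
    using Cons by (simp add: x wedge_add_left wedge_ind)
qed

lemma wedge_Omega: "wedge Omega \<beta> W =
   sum_list (map (\<lambda>(c,A). if W \<subseteq> idx \<and> A \<subseteq> W then (sgn2 A (W - A) * c) *\<^sub>R \<beta> (W - A) else 0) OmL)"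
  by (simp add: Omega_list wedge_list)



definition Abop :: "nat \<Rightarrow> (nat set \<Rightarrow> 'v::real_vector) \<Rightarrow> nat set \<Rightarrow> 'v" where
  "Abop b \<alpha> U = (\<Sum>k\<in>{1..8}. \<Sum>l\<in>{1..8}. wc b k l *\<^sub>R wedge (e1f k) (intprod l \<alpha>) U)"

definition Tf :: "(nat set \<Rightarrow> 'v::real_vector) \<Rightarrow> nat set \<Rightarrow> 'v" where
  "Tf \<alpha> U = hodge (wedge Omega \<alpha>) U"

lemma int18: "{1..8::nat} = {1,2,3,4,5,6,7,8}" by auto

lemma Abop1: "Abop 1 \<alpha> U = wedge (e1f 5) (intprod 6 \<alpha>) U - wedge (e1f 6) (intprod 5 \<alpha>) U
   - wedge (e1f 7) (intprod 8 \<alpha>) U + wedge (e1f 8) (intprod 7 \<alpha>) U"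
  unfolding Abop_def int18 by (simp add: wc_def)
lemma Abop2: "Abop 2 \<alpha> U = wedge (e1f 5) (intprod 7 \<alpha>) U - wedge (e1f 7) (intprod 5 \<alpha>) U
   + wedge (e1f 6) (intprod 8 \<alpha>) U - wedge (e1f 8) (intprod 6 \<alpha>) U"
  unfolding Abop_def int18 by (simp add: wc_def)
lemma Abop3: "Abop 3 \<alpha> U = wedge (e1f 5) (intprod 8 \<alpha>) U - wedge (e1f 8) (intprod 5 \<alpha>) U
   - wedge (e1f 6) (intprod 7 \<alpha>) U + wedge (e1f 7) (intprod 6 \<alpha>) U"
  unfolding Abop_def int18 by (simp add: wc_def)

lemma Abop1': "Abop (Suc 0) \<alpha> U = wedge (e1f 5) (intprod 6 \<alpha>) U - wedge (e1f 6) (intprod 5 \<alpha>) U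
   - wedge (e1f 7) (intprod 8 \<alpha>) U + wedge (e1f 8) (intprod 7 \<alpha>) U"
  using Abop1 by simp

lemmas comp_simps = Abop1' Tf_def hodge_def wedge_Omega OmL_def idx_eq sgn2_sum insert_Diff_if
   wedge_e1f intprod_def insert_commute Abop1 Abop2 Abop3


lemma two_subsets:
  assumes "U \<subseteq> idx" "card U = 2"
  shows "U \<in> {{1,2}, {1,3}, {1,4}, {1,5}, {1,6}, {1,7}, {1,8}, {2,3}, {2,4}, {2,5}, {2,6}, {2,7}, {2,8}, {3,4}, {3,5}, {3,6}, {3,7}, {3,8}, {4,5}, {4,6}, {4,7}, {4,8}, {5,6}, {5,7}, {5,8}, {6,7}, {6,8}, {7,8}}"
proof -
  obtain x y where U: "U = {x,y}" "x < y"
  proof -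
    obtain x y where U: "U = {x,y}" "x \<noteq> y" using assms(2) by (auto simp: card_2_iff)
    show ?thesis
    proof (cases "x < y")
      case True thus ?thesis using U that by blast
    next
      case False thus ?thesis using U that[of y x] by (auto simp: insert_commute)
    qed
  qed
  have "x \<in> {1..8}" "y \<in> {1..8}" using assms(1) U by (auto simp: idx_def)
  hence "x \<in> {1,2,3,4,5,6,7,8}" "y \<in> {1,2,3,4,5,6,7,8}" by (simp_all only: int18)
  thus ?thesis using U
    apply (simp only: insert_iff empty_iff)
    apply (elim disjE)
    apply (simp_all)
    done
qed

lemma comm_real1:
  assumes "U \<subseteq> idx" "card U = 2"
  shows "Tf (Abop 1 (\<alpha>::nat set \<Rightarrow> real)) U = Abop 1 (Tf \<alpha>) U"
  using two_subsets[OF assms(1,2)]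
  apply (simp only: insert_iff empty_iff)
  apply (elim disjE)
  apply (simp_all add: comp_simps)
  done

lemma comm_real2:
  assumes "U \<subseteq> idx" "card U = 2"
  shows "Tf (Abop 2 (\<alpha>::nat set \<Rightarrow> real)) U = Abop 2 (Tf \<alpha>) U"
  using two_subsets[OF assms(1,2)]
  apply (simp only: insert_iff empty_iff)
  apply (elim disjE)
  apply (simp_all add: comp_simps)
  done

lemma comm_real3:
  assumes "U \<subseteq> idx" "card U = 2"
  shows "Tf (Abop 3 (\<alpha>::nat set \<Rightarrow> real)) U = Abop 3 (Tf \<alpha>) U"
  using two_subsets[OF assms(1,2)]
  apply (simp only: insert_iff empty_iff)
  apply (elim disjE)
  apply (simp_all add: comp_simps)
  done

lemma comm_real:
  assumes "U \<subseteq> idx" "card U = 2" "b \<in> {1,2,3}"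
  shows "Tf (Abop b (\<alpha>::nat set \<Rightarrow> real)) U = Abop b (Tf \<alpha>) U"
  using assms comm_real1 comm_real2 comm_real3 by auto

lemma wedge_linear: "linear f \<Longrightarrow> f (wedge \<alpha> \<beta> U) = wedge \<alpha> (\<lambda>V. f (\<beta> V)) U"
  unfolding wedge_def by (simp add: linear_sum linear_scale linear_0)

lemma hodge_linear: "linear f \<Longrightarrow> f (hodge \<beta> U) = hodge (\<lambda>V. f (\<beta> V)) U"
  unfolding hodge_def by (simp add: linear_scale linear_0)

lemma intprod_linear: "linear f \<Longrightarrow> f (intprod l \<beta> U) = intprod l (\<lambda>V. f (\<beta> V)) U"
  unfolding intprod_def by (simp add: linear_scale linear_0)

lemma intprod_linear_fun: "linear f \<Longrightarrow> (\<lambda>V. f (intprod l \<beta> V)) = intprod l (\<lambda>V. f (\<beta> V))"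
  using intprod_linear by blast

lemma Abop_linear: "linear f \<Longrightarrow> f (Abop b \<beta> U) = Abop b (\<lambda>V. f (\<beta> V)) U"
  unfolding Abop_def
  by (simp add: linear_sum linear_scale wedge_linear intprod_linear_fun)

lemma Tf_linear: "linear f \<Longrightarrow> f (Tf \<beta> U) = Tf (\<lambda>V. f (\<beta> V)) U"
  unfolding Tf_def
  by (simp add: hodge_linear wedge_linear)

lemma Abop_linear_fun: "linear f \<Longrightarrow> (\<lambda>V. f (Abop b \<beta> V)) = Abop b (\<lambda>V. f (\<beta> V))"
  using Abop_linear by blast
lemma Tf_linear_fun: "linear f \<Longrightarrow> (\<lambda>V. f (Tf \<beta> V)) = Tf (\<lambda>V. f (\<beta> V))"
  using Tf_linear by blast

lemma linear_entry: "linear (\<lambda>M::mat4. M $ r $ c)"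
  by (rule linearI) simp_all

lemma comm_mat:
  assumes "U \<subseteq> idx" "card U = 2" "b \<in> {1,2,3}"
  shows "Tf (Abop b (\<phi>::nat set \<Rightarrow> mat4)) U = Abop b (Tf \<phi>) U"
proof -
  have "Tf (Abop b \<phi>) U $ r $ c = Abop b (Tf \<phi>) U $ r $ c" for r c
  proof -
    have "Tf (Abop b \<phi>) U $ r $ c = Tf (Abop b (\<lambda>V. \<phi> V $ r $ c)) U"
      using Tf_linear[OF linear_entry] Abop_linear_fun[OF linear_entry] by metis
    also have "\<dots> = Abop b (Tf (\<lambda>V. \<phi> V $ r $ c)) U"
      by (rule comm_real[OF assms])
    also have "\<dots> = Abop b (Tf \<phi>) U $ r $ c"
      using Tf_linear_fun[OF linear_entry] Abop_linear[OF linear_entry] by metis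
    finally show ?thesis .
  qed
  thus ?thesis by (simp add: vec_eq_iff)
qed

lemma Tf_add: "Tf (\<lambda>V. \<beta> V + \<gamma> V) U = Tf \<beta> U + Tf \<gamma> U"
  unfolding Tf_def hodge_def wedge_def
  by (simp add: sum.distrib scaleR_add_right)

lemma Tf_zero: "Tf (\<lambda>V. 0) U = 0"
  unfolding Tf_def hodge_def wedge_def by simp

lemma Tf_sum: "finite B \<Longrightarrow> Tf (\<lambda>V. \<Sum>b\<in>B. \<beta> b V) U = (\<Sum>b\<in>B. Tf (\<beta> b) U)"
proof (induction B rule: finite_induct)
  case empty
  then show ?case by (simp add: Tf_zero)
next
  case (insert x F)
  then show ?case by (simp add: Tf_add)
qed

lemma linear_lie: "linear (lie A)"
  by (rule linearI) (simp_all add: lie_add_right lie_scale_right)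

lemma linear_scaleR_const: "linear (\<lambda>x::'a::real_vector. c *\<^sub>R x)"
  by (rule linearI) (simp_all add: scaleR_add_right)

definition gb :: "nat \<Rightarrow> mat4" where
  "gb b = (if b = 1 then mi else if b = 2 then mj else mk)"

lemma Wm_sum: "Wm k l = (\<Sum>b\<in>{1,2,3}. wc b k l *\<^sub>R gb b)"
  by (simp add: Wm_def emb_def gb_def)

lemma linear_lie_left: "linear (\<lambda>A. lie A X)"
  by (rule linearI) (simp_all add: lie_add_left lie_scale_left)

lemma lie_sum_left: "lie (\<Sum>b\<in>B. f b) X = (\<Sum>b\<in>B. lie (f b) X)"
  using linear_sum[OF linear_lie_left] by metis

lemma psi_eq:
  assumes "\<epsilon> > 0"
  shows "(\<lambda>U. \<Sum>k\<in>{1..8}. \<Sum>l\<in>{1..8}. wedge (e1f k) (\<lambda>V. lie (FB \<epsilon> p k l) (intprod l \<phi> V)) U)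
       = (\<lambda>U. (2 * \<epsilon>\<^sup>2 / (Dp \<epsilon> p)\<^sup>2) *\<^sub>R (\<Sum>b\<in>{1,2,3}. lie (gb b) (Abop b \<phi> U)))"
proof
  fix U
  define s where "s = 2 * \<epsilon>\<^sup>2 / (Dp \<epsilon> p)\<^sup>2"
  define W where "W k l = wedge (e1f k) (intprod l \<phi>) U" for k l
  have "wedge (e1f k) (\<lambda>V. lie (FB \<epsilon> p k l) (intprod l \<phi> V)) U = lie (FB \<epsilon> p k l) (W k l)" for k l
    unfolding W_def using wedge_linear[OF linear_lie] by metis
  also have "lie (FB \<epsilon> p k l) (W k l) = s *\<^sub>R (\<Sum>b\<in>{1,2,3}. wc b k l *\<^sub>R lie (gb b) (W k l))" for k l
    unfolding FB_eq[OF assms] Wm_sum s_def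
    by (simp only: lie_scale_left lie_sum_left)
  finally have 1: "(\<Sum>k\<in>{1..8}. \<Sum>l\<in>{1..8}. wedge (e1f k) (\<lambda>V. lie (FB \<epsilon> p k l) (intprod l \<phi> V)) U)
     = (\<Sum>k\<in>{1..8}. \<Sum>l\<in>{1..8}. s *\<^sub>R (\<Sum>b\<in>{1,2,3}. wc b k l *\<^sub>R lie (gb b) (W k l)))"
    by simp
  have 2: "lie (gb b) (Abop b \<phi> U) = (\<Sum>k\<in>{1..8}. \<Sum>l\<in>{1..8}. wc b k l *\<^sub>R lie (gb b) (W k l))" for b
    unfolding Abop_def W_def
    by (simp add: linear_sum[OF linear_lie] linear_scale[OF linear_lie])
  show "(\<Sum>k\<in>{1..8}. \<Sum>l\<in>{1..8}. wedge (e1f k) (\<lambda>V. lie (FB \<epsilon> p k l) (intprod l \<phi> V)) U)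
       = (2 * \<epsilon>\<^sup>2 / (Dp \<epsilon> p)\<^sup>2) *\<^sub>R (\<Sum>b\<in>{1,2,3}. lie (gb b) (Abop b \<phi> U))"
    unfolding 1 2 s_def[symmetric]
    by (simp add: scaleR_add_right sum.distrib scaleR_sum_right)
qed

lemma finite_idx: "finite idx" by (simp add: idx_def)

lemma t1: assumes False: "\<not> (U \<subseteq> idx \<and> k \<in> U)" shows "wedge (e1f k) (intprod l \<phi>) U = 0"
  unfolding wedge_e1f by (simp only: if_not_P[OF False])

lemma t2: assumes False: "\<not> (l \<in> idx \<and> l \<notin> U - {k})" shows "intprod l \<phi> (U - {k}) = 0"
proof -
    have nc: "\<not> (l \<in> idx \<and> U - {k} \<subseteq> idx \<and> l \<notin> U - {k})" using False by blast
    show "intprod l \<phi> (U - {k}) = 0" unfolding intprod_def by (simp only: if_not_P[OF nc])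
qed

lemma t3: "intprod l \<phi> (U - {k}) = 0 \<Longrightarrow> wedge (e1f k) (intprod l \<phi>) U = 0"
  by (simp add: wedge_e1f)

lemma t4: assumes "finite U" "k \<in> U" "l \<notin> U - {k}" shows "card (insert l (U - {k})) = card U"
proof -
    have c0: "card U > 0" using assms card_gt_0_iff by blast
    have "card (insert l (U - {k})) = Suc (card (U - {k}))"
      using assms by (intro card_insert_disjoint) auto
    also have "\<dots> = card U" using assms c0 by (simp add: card_Diff_singleton)
    finally show ?thesis .
qed

lemma x1: "U \<subseteq> idx \<and> k \<in> U \<Longrightarrow> finite U" using finite_subset[of U idx] finite_idx by blast

lemma x2: assumes "U \<subseteq> idx \<and> k \<in> U" "l \<in> idx \<and> l \<notin> U - {k}" shows "card (insert l (U - {k})) = card U"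
  using t4[of U k l] x1 assms by blast

lemma x3:
  assumes "is_form 2 \<phi>" "\<not> (U \<subseteq> idx \<and> card U = 2)"
    "U \<subseteq> idx \<and> k \<in> U" "l \<in> idx \<and> l \<notin> U - {k}"
  shows "\<phi> (insert l (U - {k})) = 0"
proof -
  have ci: "card (insert l (U - {k})) = card U" using x2 assms(3,4) by blast
  have "card U \<noteq> 2" using assms(2,3) by blast
  hence "card (insert l (U - {k})) \<noteq> 2" using ci by simp
  thus ?thesis using assms(1) unfolding is_form_def by blast
qed

lemma x4: "\<phi> (insert l (U - {k})) = 0 \<Longrightarrow> intprod l \<phi> (U - {k}) = 0"
  by (simp add: intprod_def)

lemma wedge_intprod_zero:
  assumes "is_form 2 \<phi>" "\<not> (U \<subseteq> idx \<and> card U = 2)"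
  shows "wedge (e1f k) (intprod l \<phi>) U = 0"
proof -
  have "\<not> (U \<subseteq> idx \<and> k \<in> U) \<or> \<not> (l \<in> idx \<and> l \<notin> U - {k}) \<or> \<phi> (insert l (U - {k})) = 0"
    using x3[OF assms] by blast
  then show ?thesis
  proof (elim disjE)
    assume h: "\<not> (U \<subseteq> idx \<and> k \<in> U)" show ?thesis by (rule t1[OF h])
  next
    assume h: "\<not> (l \<in> idx \<and> l \<notin> U - {k})" show ?thesis by (rule t3[OF t2[OF h]])
  next
    assume h: "\<phi> (insert l (U - {k})) = 0" show ?thesis by (rule t3[OF x4[of \<phi> l U k, OF h]])
  qed
qed

lemma Abop_zero:
  assumes "is_form 2 \<phi>" "\<not> (U \<subseteq> idx \<and> card U = 2)"
  shows "Abop b \<phi> U = 0"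
  unfolding Abop_def using wedge_intprod_zero[OF assms] by simp

lemma sum_list_map_zero: "(\<And>x. x \<in> set L \<Longrightarrow> f x = 0) \<Longrightarrow> sum_list (map f L) = 0"
  by (induction L) auto

lemma OmL_card: "(c, A) \<in> set OmL \<Longrightarrow> card A = 4"
  unfolding OmL_def by auto

lemma card_idx: "card idx = 8" by (simp add: idx_def)

lemma Tf_zero_form:
  assumes "is_form 2 \<psi>" "\<not> (U \<subseteq> idx \<and> card U = 2)"
  shows "Tf \<psi> U = 0"
proof (cases "U \<subseteq> idx")
  case False
  thus ?thesis by (simp add: Tf_def hodge_def)
next
  case True
  have fU: "finite U" using True finite_subset[OF _ finite_idx] by blast
  have cW: "card (idx - U) = 8 - card U"
    using True fU by (simp add: card_Diff_subset card_idx)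
  have "wedge Omega \<psi> (idx - U) = 0"
    unfolding wedge_Omega
  proof (rule sum_list_map_zero)
    fix x assume x: "x \<in> set OmL"
    obtain c A where xA: "x = (c, A)" by fastforce
    have cA: "card A = 4" using x xA OmL_card by blast
    have fA: "finite A" using cA card.infinite by fastforce
    show "(case x of (c, A) \<Rightarrow> if idx - U \<subseteq> idx \<and> A \<subseteq> idx - U
            then (sgn2 A (idx - U - A) * c) *\<^sub>R \<psi> (idx - U - A) else 0) = 0"
    proof (cases "A \<subseteq> idx - U")
      case True
      have "card (idx - U - A) = 8 - card U - 4"
        using True cW cA fA by (simp add: card_Diff_subset)
      hence "\<not> (idx - U - A \<subseteq> idx \<and> card (idx - U - A) = 2)"
        using assms(2) True \<open>U \<subseteq> idx\<close> by auto
      hence "\<psi> (idx - U - A) = 0" using assms(1) unfolding is_form_def by blast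
      thus ?thesis using xA by simp
    next
      case False
      thus ?thesis using xA by simp
    qed
  qed
  thus ?thesis by (simp add: Tf_def hodge_def)
qed

lemma gLie_emb: "X \<in> gLie \<longleftrightarrow> (\<exists>a b c. X = emb a b c)"
proof
  assume "X \<in> gLie"
  then show "\<exists>a b c. X = emb a b c"
    unfolding gLie_def
  proof (induction rule: span_induct_alt)
    case base
    then show ?case using emb_zero by blast
  next
    case (step c x y)
    then obtain a b d where y: "y = emb a b d" by blast
    from step(1) have "x = mi \<or> x = mj \<or> x = mk" by simp
    then show ?case
    proof (elim disjE)
      assume x: "x = mi" show ?thesis unfolding y x mi_emb emb_scale emb_add by blast
    next
      assume x: "x = mj" show ?thesis unfolding y x mj_emb emb_scale emb_add by blast
    next
      assume x: "x = mk" show ?thesis unfolding y x mk_emb emb_scale emb_add by blast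
    qed
  qed
next
  assume "\<exists>a b c. X = emb a b c"
  then obtain a b c where X: "X = emb a b c" by blast
  have i: "mi \<in> gLie" unfolding gLie_def by (rule span_base) simp
  have j: "mj \<in> gLie" unfolding gLie_def by (rule span_base) simp
  have k: "mk \<in> gLie" unfolding gLie_def by (rule span_base) simp
  have "a *\<^sub>R mi + b *\<^sub>R mj + c *\<^sub>R mk \<in> gLie"
    using i j k unfolding gLie_def by (intro span_add span_scale)
  thus "X \<in> gLie" unfolding X emb_def .
qed

lemma lie_gb_gLie: "X \<in> gLie \<Longrightarrow> lie (gb b) X \<in> gLie"
  unfolding gLie_emb gb_def
  by (auto simp: mi_emb mj_emb mk_emb lie_emb emb_eq_iff)

lemma Abop_gLie:
  assumes "\<And>V. \<phi> V \<in> gLie"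
  shows "Abop b \<phi> U \<in> gLie"
proof -
  have "wedge (e1f k) (intprod l \<phi>) U \<in> gLie" for k l
    using assms unfolding wedge_e1f intprod_def gLie_def
    by (simp add: span_zero span_scale)
  thus ?thesis unfolding Abop_def gLie_def
    by (intro span_sum span_scale) simp
qed

theorem lemma2p2:
  fixes \<epsilon> :: real and p :: "nat \<Rightarrow> real" and \<phi> :: "nat set \<Rightarrow> mat4"
  assumes "\<epsilon> > 0"
    and "\<phi> \<in> Lambda2plus_g"
  shows "(\<lambda>U. \<Sum>k\<in>{1..8}. \<Sum>l\<in>{1..8}.
            wedge (e1f k) (\<lambda>V. lie (FB \<epsilon> p k l) (intprod l \<phi> V)) U) \<in> Lambda2plus_g"
proof -
  have form: "is_form 2 \<phi>" and inG: "\<And>U. \<phi> U \<in> gLie"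
    and eq: "\<And>U. 3 *\<^sub>R \<phi> U - hodge (wedge Omega \<phi>) U = 0"
    using assms(2) unfolding Lambda2plus_g_def by auto
  have Tphi: "Tf \<phi> = (\<lambda>V. 3 *\<^sub>R \<phi> V)"
  proof
    fix V show "Tf \<phi> V = 3 *\<^sub>R \<phi> V" using eq[of V] unfolding Tf_def by simp
  qed
  define s where "s = 2 * \<epsilon>\<^sup>2 / (Dp \<epsilon> p)\<^sup>2"
  define X where "X U = (\<Sum>b\<in>{1,2,3::nat}. lie (gb b) (Abop b \<phi> U))" for U
  define \<psi> where "\<psi> U = s *\<^sub>R X U" for U
  have psi: "(\<lambda>U. \<Sum>k\<in>{1..8}. \<Sum>l\<in>{1..8}.
            wedge (e1f k) (\<lambda>V. lie (FB \<epsilon> p k l) (intprod l \<phi> V)) U) = \<psi>"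
    unfolding psi_eq[OF assms(1)] \<psi>_def X_def s_def ..
  have lie0: "lie A 0 = 0" for A :: mat4 by (simp add: lie_def)
  have zero: "\<psi> U = 0" if "\<not> (U \<subseteq> idx \<and> card U = 2)" for U
    unfolding \<psi>_def X_def using Abop_zero[OF form that] lie0 by simp
  have isf: "is_form 2 \<psi>"
    unfolding is_form_def using zero by blast
  have mem: "\<psi> U \<in> gLie" for U
  proof -
    have "X U \<in> gLie"
      unfolding X_def gLie_def
      using lie_gb_gLie[OF Abop_gLie[OF inG]] unfolding gLie_def
      by (intro span_sum) auto
    thus ?thesis unfolding \<psi>_def gLie_def by (rule span_scale)
  qed
  have T: "hodge (wedge Omega \<psi>) U = 3 *\<^sub>R \<psi> U" for U
  proof (cases "U \<subseteq> idx \<and> card U = 2")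
    case False
    have "hodge (wedge Omega \<psi>) U = Tf \<psi> U" by (simp add: Tf_def)
    also have "\<dots> = 0" by (rule Tf_zero_form[OF isf False])
    finally show ?thesis using zero[OF False] by simp
  next
    case True
    have "Tf \<psi> U = s *\<^sub>R Tf X U"
      using Tf_linear[OF linear_scaleR_const, of s X U] unfolding \<psi>_def by simp
    also have "Tf X U = (\<Sum>b\<in>{1,2,3::nat}. Tf (\<lambda>V. lie (gb b) (Abop b \<phi> V)) U)"
      unfolding X_def by (rule Tf_sum) simp
    also have "\<dots> = (\<Sum>b\<in>{1,2,3::nat}. 3 *\<^sub>R lie (gb b) (Abop b \<phi> U))"
    proof (rule sum.cong[OF refl])
      fix b :: nat assume b: "b \<in> {1,2,3}"
      have "Tf (\<lambda>V. lie (gb b) (Abop b \<phi> V)) U = lie (gb b) (Tf (Abop b \<phi>) U)"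
        using Tf_linear[OF linear_lie, of "gb b" "Abop b \<phi>" U] by simp
      also have "Tf (Abop b \<phi>) U = Abop b (Tf \<phi>) U"
        using comm_mat True b by blast
      also have "\<dots> = Abop b (\<lambda>V. 3 *\<^sub>R \<phi> V) U" unfolding Tphi ..
      also have "\<dots> = 3 *\<^sub>R Abop b \<phi> U"
        using Abop_linear[OF linear_scaleR_const, of 3 b \<phi> U] by simp
      finally show "Tf (\<lambda>V. lie (gb b) (Abop b \<phi> V)) U = 3 *\<^sub>R lie (gb b) (Abop b \<phi> U)"
        by (simp add: lie_scale_right)
    qed
    also have "s *\<^sub>R \<dots> = 3 *\<^sub>R \<psi> U"
      unfolding \<psi>_def X_def by (simp add: scaleR_add_right algebra_simps)
    finally show ?thesis by (simp add: Tf_def)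
  qed
  show ?thesis
    unfolding psi Lambda2plus_g_def using isf mem T by simp
qed

end
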